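(* Let $\mathcal{D}$ be either the free associative algebra $\mathbb{K}\langle d_1,d_2,\dots\rangle$ or the commutative polynomial algebra $\mathbb{K}[d_1,d_2,\dots]$, and let $B_n$ be the Bell polynomials in $\mathcal{D}$. Then $B_0=\mathbb{I}$ and, for all $n\ge0$, $$B_{n+1}=\sum_{k=0}^n\binom{n}{k}B_{n-k}\,d_{k+1}.$$
   Context: $\mathbb{I}$ denotes the unit (empty word) of $\mathcal{D}$. Let $\partial:\mathcal{D}\to\mathcal{D}$ be the linear derivation with $\partial(d_i)=d_{i+1}$, extended by the Leibniz rule $\partial(uv)=\partial(u)v+u\partial(v)$. The Bell polynomials are defined by $B_0=\mathbb{I}$ and $B_n=(d_1+\partial)B_{n-1}=d_1B_{n-1}+\partial(B_{n-1})$ for $n>0$. *)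

theory Defs
  imports Main "HOL-Library.Poly_Mapping"
begin

text \<open>Letter i (i :: nat) stands for the generator d_(i+1).  The monoid
operation is concatenation, the unit is the empty word.\<close>

typedef word = "UNIV :: nat list set"
  morphisms letters Word by simp

setup_lifting type_definition_word

instantiation word :: monoid_add
begin
lift_definition zero_word :: word is "[]" .
lift_definition plus_word :: "word \<Rightarrow> word \<Rightarrow> word" is "(@)" .
instance by standard (transfer; simp)+
end

text \<open>Free associative algebra K<d_1,d_2,...>: finitely supported
K-valued functions on words, with convolution product.\<close>
type_synonym 'k free_alg = "word \<Rightarrow>\<^sub>0 'k"

text \<open>Commutative polynomial algebra K[d_1,d_2,...]: finitely supported
K-valued functions on monomials (finitely supported exponent vectors).\<close>
type_synonym 'k comm_alg = "(nat \<Rightarrow>\<^sub>0 nat) \<Rightarrow>\<^sub>0 'k"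

definition fgen :: "nat \<Rightarrow> 'k::field free_alg" where
  "fgen i = Poly_Mapping.single (Word [i - 1]) 1"

definition cgen :: "nat \<Rightarrow> 'k::field comm_alg" where
  "cgen i = Poly_Mapping.single (Poly_Mapping.single (i - 1) 1) 1"

definition scal :: "'k::field \<Rightarrow> ('a \<Rightarrow>\<^sub>0 'k) \<Rightarrow> ('a \<Rightarrow>\<^sub>0 'k)" where
  "scal c u = Poly_Mapping.map (\<lambda>x. c * x) u"

definition is_bell_derivation ::
  "(nat \<Rightarrow> ('a::monoid_add \<Rightarrow>\<^sub>0 'k::field)) \<Rightarrow> (('a \<Rightarrow>\<^sub>0 'k) \<Rightarrow> ('a \<Rightarrow>\<^sub>0 'k)) \<Rightarrow> bool" where
  "is_bell_derivation d D \<longleftrightarrow>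
     (\<forall>u v. D (u + v) = D u + D v) \<and>
     (\<forall>c u. D (scal c u) = scal c (D u)) \<and>
     (\<forall>u v. D (u * v) = D u * v + u * D v) \<and>
     (\<forall>i\<ge>1. D (d i) = d (Suc i))"

fun bell :: "(nat \<Rightarrow> 'r::ring_1) \<Rightarrow> ('r \<Rightarrow> 'r) \<Rightarrow> nat \<Rightarrow> 'r" where
  "bell d D 0 = 1"
| "bell d D (Suc n) = d 1 * bell d D n + D (bell d D n)"

end

theory Submission
  imports Defs
begin

lemma bell_rec:
  fixes d :: "nat \<Rightarrow> 'r::ring_1" and D :: "'r \<Rightarrow> 'r"
  assumes add: "\<And>u v. D (u + v) = D u + D v"
    and leib: "\<And>u v. D (u * v) = D u * v + u * D v"
    and gen: "\<And>i. i \<ge> 1 \<Longrightarrow> D (d i) = d (Suc i)"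
  shows "bell d D (Suc n) = (\<Sum>k\<le>n. of_nat (n choose k) * bell d D (n - k) * d (k + 1))"
proof (induction n)
  case 0
  have "D (1 * 1) = D 1 * 1 + 1 * D 1" by (rule leib)
  then have "D 1 = 0" by simp
  then show ?case by simp
next
  case (Suc n)
  define B where "B = bell d D"
  have D0: "D 0 = 0" using add[of 0 0] by simp
  have Dsum: "D (sum f A) = (\<Sum>x\<in>A. D (f x))" for f :: "nat \<Rightarrow> 'r" and A
  proof (cases "finite A")
    case True then show ?thesis by (induction A rule: finite_induct) (auto simp: D0 add)
  next
    case False then show ?thesis by (simp add: D0)
  qed
  have Dnat: "D (of_nat c * x) = of_nat c * D x" for c x
    by (induction c) (auto simp: D0 add distrib_right)
  have D1: "D 1 = 0"
  proof -
    have "D (1 * 1) = D 1 * 1 + 1 * D 1" by (rule leib)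
    then show ?thesis by simp
  qed
  have Dc: "D (of_nat c) = 0" for c
    by (induction c) (auto simp: D0 D1 add)
  have IH: "B (Suc n) = (\<Sum>k\<le>n. of_nat (n choose k) * B (n - k) * d (k + 1))"
    using Suc unfolding B_def .
  have "B (Suc (Suc n)) = d 1 * B (Suc n) + D (B (Suc n))" by (simp add: B_def)
  also have "d 1 * B (Suc n) = (\<Sum>k\<le>n. of_nat (n choose k) * (d 1 * B (n - k)) * d (k + 1))"
    unfolding IH sum_distrib_left
  proof (rule sum.cong)
    fix k
    have "d 1 * of_nat (n choose k) = of_nat (n choose k) * d 1" by (rule mult_of_nat_commute[symmetric])
    then show "d 1 * (of_nat (n choose k) * B (n - k) * d (k + 1)) = of_nat (n choose k) * (d 1 * B (n - k)) * d (k + 1)"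
      by (metis mult.assoc)
  qed simp
  also have "D (B (Suc n)) = (\<Sum>k\<le>n. of_nat (n choose k) * D (B (n - k)) * d (k + 1))
       + (\<Sum>k\<le>n. of_nat (n choose k) * B (n - k) * d (k + 2))"
    unfolding IH Dsum sum.distrib[symmetric]
    by (rule sum.cong) (simp_all add: mult.assoc Dc leib gen distrib_left)
  finally have L: "B (Suc (Suc n)) = (\<Sum>k\<le>n. of_nat (n choose k) * B (Suc n - k) * d (k + 1))
       + (\<Sum>k\<le>n. of_nat (n choose k) * B (n - k) * d (k + 2))"
  proof -
    assume h: "B (Suc (Suc n)) = (\<Sum>k\<le>n. of_nat (n choose k) * (d 1 * B (n - k)) * d (k + 1)) +
      ((\<Sum>k\<le>n. of_nat (n choose k) * D (B (n - k)) * d (k + 1)) +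
       (\<Sum>k\<le>n. of_nat (n choose k) * B (n - k) * d (k + 2)))"
    have "(\<Sum>k\<le>n. of_nat (n choose k) * (d 1 * B (n - k)) * d (k + 1)) +
      (\<Sum>k\<le>n. of_nat (n choose k) * D (B (n - k)) * d (k + 1))
      = (\<Sum>k\<le>n. of_nat (n choose k) * B (Suc n - k) * d (k + 1))"
      unfolding sum.distrib[symmetric]
      by (rule sum.cong) (simp_all add: B_def Suc_diff_le distrib_left distrib_right)
    then show ?thesis using h by (simp add: add.assoc[symmetric])
  qed
  have A: "(\<Sum>k\<le>n. of_nat (n choose k) * B (Suc n - k) * d (k + 1))
     = B (Suc n) * d 1 + (\<Sum>k\<le>n. of_nat (n choose Suc k) * B (n - k) * d (k + 2))"
  proof -
    have "(\<Sum>k\<le>n. of_nat (n choose k) * B (Suc n - k) * d (k + 1))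
        = (\<Sum>k\<le>Suc n. of_nat (n choose k) * B (Suc n - k) * d (k + 1))"
      by (simp add: binomial_eq_0)
    also have "\<dots> = B (Suc n) * d 1 + (\<Sum>k\<le>n. of_nat (n choose Suc k) * B (n - k) * d (k + 2))"
      by (subst sum.atMost_Suc_shift) (simp add: add.commute)
    finally show ?thesis .
  qed
  have T: "(\<Sum>k\<le>Suc n. of_nat (Suc n choose k) * B (Suc n - k) * d (k + 1))
      = B (Suc n) * d 1 + (\<Sum>k\<le>n. of_nat (n choose k) * B (n - k) * d (k + 2))
        + (\<Sum>k\<le>n. of_nat (n choose Suc k) * B (n - k) * d (k + 2))"
    by (subst sum.atMost_Suc_shift) (simp add: sum.distrib[symmetric] distrib_right add.assoc add.commute)
  show ?case using L A T unfolding B_def by (simp add: algebra_simps)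
qed

lemma bell_main:
  fixes d :: "nat \<Rightarrow> ('a::monoid_add \<Rightarrow>\<^sub>0 'k::field)"
  assumes "is_bell_derivation d D"
  shows "bell d D 0 = 1 \<and>
         (\<forall>n. bell d D (Suc n) = (\<Sum>k = 0..n. of_nat (n choose k) * bell d D (n - k) * d (k + 1)))"
proof -
  have h: "\<And>u v. D (u + v) = D u + D v" "\<And>u v. D (u * v) = D u * v + u * D v"
    "\<And>i. i \<ge> 1 \<Longrightarrow> D (d i) = d (Suc i)"
    using assms unfolding is_bell_derivation_def by auto
  show ?thesis using bell_rec[where d=d and D=D, OF h] by (simp add: atLeast0AtMost)
qed

theorem mainTheorem4:
  shows "(\<forall>D :: 'k::field free_alg \<Rightarrow> 'k free_alg.
            is_bell_derivation fgen D \<longrightarrow>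
              bell fgen D 0 = 1 \<and>
              (\<forall>n. bell fgen D (Suc n) =
                   (\<Sum>k = 0..n. of_nat (n choose k) * bell fgen D (n - k) * fgen (k + 1))))
       \<and> (\<forall>D :: 'k comm_alg \<Rightarrow> 'k comm_alg.
            is_bell_derivation cgen D \<longrightarrow>
              bell cgen D 0 = 1 \<and>
              (\<forall>n. bell cgen D (Suc n) =
                   (\<Sum>k = 0..n. of_nat (n choose k) * bell cgen D (n - k) * cgen (k + 1))))"
  using bell_main[where d=fgen] bell_main[where d=cgen] by blast

end
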